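(* Let $F$ be a field, $n$ a positive integer, and let $S\subseteq M_n(F)$ be a Clifford semigroup (under matrix multiplication) in which every matrix has rank $1$. Then $S$ is a commutative group, and for every matrix in $S$ all of its eigenvalues (in an algebraic closure of $F$) lie in $F$.
   Context: $M_n(F)$ denotes the set of $n\times n$ matrices over $F$. A Clifford semigroup is a completely regular inverse semigroup (equivalently, a regular semigroup whose idempotents are central). *)

theory Defs
  imports "Jordan_Normal_Form.DL_Rank" "Jordan_Normal_Form.Char_Poly"
begin

definition mat_semigroup :: "nat \<Rightarrow> 'a::field mat set \<Rightarrow> bool" where
  "mat_semigroup n S \<longleftrightarrow> S \<noteq> {} \<and> S \<subseteq> carrier_mat n n \<and> (\<forall>A\<in>S. \<forall>B\<in>S. A * B \<in> S)"

text \<open>Clifford semigroup: regular semigroup whose idempotents are central.\<close>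
definition clifford_mat_semigroup :: "nat \<Rightarrow> 'a::field mat set \<Rightarrow> bool" where
  "clifford_mat_semigroup n S \<longleftrightarrow> mat_semigroup n S
     \<and> (\<forall>A\<in>S. \<exists>X\<in>S. A * X * A = A)
     \<and> (\<forall>E\<in>S. E * E = E \<longrightarrow> (\<forall>A\<in>S. E * A = A * E))"

definition mat_group :: "'a::field mat set \<Rightarrow> bool" where
  "mat_group S \<longleftrightarrow> (\<forall>A\<in>S. \<forall>B\<in>S. A * B \<in> S)
     \<and> (\<exists>E\<in>S. (\<forall>A\<in>S. E * A = A \<and> A * E = A) \<and> (\<forall>A\<in>S. \<exists>B\<in>S. A * B = E \<and> B * A = E))"

text \<open>All eigenvalues (in an algebraic closure) lie in F: the characteristic
  polynomial splits into linear factors over F.\<close>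
definition eigenvalues_in_field :: "'a::field mat \<Rightarrow> bool" where
  "eigenvalues_in_field A \<longleftrightarrow> (\<exists>as. char_poly A = (\<Prod>a\<leftarrow>as. [:- a, 1:]))"

end

theory Submission
  imports Defs
begin

lemma rank1_outer:
  fixes A :: "'a::field mat"
  assumes A: "A \<in> carrier_mat n n" and r: "vec_space.rank n A = 1"
  shows "\<exists>u v. u \<in> carrier_vec n \<and> (\<forall>i<n. \<forall>j<n. A $$ (i,j) = u$i * v j)"
proof -
  interpret vec_space "TYPE('a)" n .
  obtain S where max: "maximal S (\<lambda>T. T \<subseteq> set (cols A) \<and> lin_indpt T)"
    using maximal_exists[of "(\<lambda>T. T \<subseteq> set (cols A) \<and> lin_indpt T)" "card (set (cols A))" "{}"]
    by (meson List.finite_set card_mono empty_iff empty_subsetI finite_lin_indpt2 rev_finite_subset)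
  have "card S = 1" using rank_card_indpt[OF A max] r by simp
  then obtain u where S: "S = {u}" by (rule card_1_singletonE)
  have uc: "u \<in> set (cols A)" and li: "lin_indpt {u}" using max S unfolding maximal_def by auto
  have colsc: "set (cols A) \<subseteq> carrier_vec n" using A cols_dim by blast
  have u: "u \<in> carrier_vec n" using uc colsc by auto
  have "\<exists>c. \<forall>i<n. A $$ (i,j) = u $ i * c" if j: "j < n" for j
  proof -
    have cj: "col A j \<in> set (cols A)" using j A by (metis cols_length cols_nth carrier_matD(2) nth_mem)
    have cc: "col A j \<in> carrier_vec n" using cj colsc by auto
    have sp: "col A j \<in> span {u}"
    proof (cases "col A j = u")
      case True then show ?thesis using u by (simp add: span_mem)
    next
      case False
      have "lin_dep ({u} \<union> {col A j})"
      proof (rule ccontr)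
        assume "\<not> lin_dep ({u} \<union> {col A j})"
        have m: "\<forall>B. B \<supseteq> S \<and> (B \<subseteq> set (cols A) \<and> lin_indpt B) \<longrightarrow> B = S" using max by (simp add: maximal_def)
        have "{u} \<union> {col A j} = S" by (rule m[rule_format], insert S cj uc \<open>\<not> lin_dep ({u} \<union> {col A j})\<close>, auto)
        then show False using False S by auto
      qed
      then show ?thesis using lin_dep_iff_in_span[of "{u}" "col A j"] li u cc False by auto
    qed
    then obtain a where a: "lincomb a {u} = col A j" using finite_in_span[of "{u}" "col A j"] u by auto
    show ?thesis
    proof (intro exI allI impI)
      fix i assume i: "i < n"
      have "col A j $ i = a u * u $ i" using lincomb_index[OF i, of "{u}" a] u a by simp
      then show "A $$ (i,j) = u $ i * a u" using i j A by (simp add: mult.commute)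
    qed
  qed
  then have "\<forall>j. \<exists>c. j < n \<longrightarrow> (\<forall>i<n. A $$ (i,j) = u $ i * c)" by blast
  then obtain v where "\<forall>j. j < n \<longrightarrow> (\<forall>i<n. A $$ (i,j) = u $ i * v j)" by metis
  then show ?thesis using u by blast
qed

definition outer :: "nat \<Rightarrow> 'a::field vec \<Rightarrow> 'a vec \<Rightarrow> 'a mat" where
  "outer n u v = mat n n (\<lambda>(i,j). u $ i * v $ j)"

lemma outer_carrier[simp]: "outer n u v \<in> carrier_mat n n"
  by (simp add: outer_def)

lemma outer_dim[simp]: "dim_row (outer n u v) = n" "dim_col (outer n u v) = n"
  by (auto simp: outer_def)

lemma outer_index[simp]: "i < n \<Longrightarrow> j < n \<Longrightarrow> outer n u v $$ (i,j) = u $ i * v $ j"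
  by (simp add: outer_def)

lemma outer_mult_vec: assumes "v \<in> carrier_vec n" "z \<in> carrier_vec n" "u \<in> carrier_vec n"
  shows "outer n u v *\<^sub>v z = (v \<bullet> z) \<cdot>\<^sub>v u"
  by (rule eq_vecI, insert assms, auto simp: outer_def scalar_prod_def sum_distrib_left ac_simps)

lemma mult_outer: assumes M: "M \<in> carrier_mat n n" and u: "u \<in> carrier_vec n"
  shows "M * outer n u v = outer n (M *\<^sub>v u) v"
proof (rule eq_matI)
  fix i j assume i: "i < dim_row (outer n (M *\<^sub>v u) v)" and j: "j < dim_col (outer n (M *\<^sub>v u) v)"
  then have i: "i < n" and j: "j < n" by auto
  have "(M * outer n u v) $$ (i,j) = (\<Sum>k<n. M $$ (i,k) * (u $ k * v $ j))"
    using M i j by (simp add: scalar_prod_def atLeast0LessThan)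
  also have "\<dots> = (\<Sum>k<n. M $$ (i,k) * u $ k) * v $ j"
    by (simp add: sum_distrib_right mult.assoc)
  also have "\<dots> = outer n (M *\<^sub>v u) v $$ (i,j)"
    using M u i j by (simp add: scalar_prod_def atLeast0LessThan)
  finally show "(M * outer n u v) $$ (i,j) = outer n (M *\<^sub>v u) v $$ (i,j)" .
qed (insert M, auto)

lemma outer_mult: assumes M: "M \<in> carrier_mat n n" and v: "v \<in> carrier_vec n"
  shows "outer n u v * M = outer n u (transpose_mat M *\<^sub>v v)"
proof (rule eq_matI)
  fix i j assume i: "i < dim_row (outer n u (transpose_mat M *\<^sub>v v))" and j: "j < dim_col (outer n u (transpose_mat M *\<^sub>v v))"
  then have i: "i < n" and j: "j < n" by auto
  have "(outer n u v * M) $$ (i,j) = (\<Sum>k<n. (u $ i * v $ k) * M $$ (k,j))"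
    using M i j by (simp add: scalar_prod_def atLeast0LessThan)
  also have "\<dots> = u $ i * (\<Sum>k<n. M $$ (k,j) * v $ k)"
    by (simp add: sum_distrib_left ac_simps)
  also have "\<dots> = outer n u (transpose_mat M *\<^sub>v v) $$ (i,j)"
    using M v i j by (simp add: scalar_prod_def atLeast0LessThan)
  finally show "(outer n u v * M) $$ (i,j) = outer n u (transpose_mat M *\<^sub>v v) $$ (i,j)" .
qed (insert M, auto)

lemma outer_outer: assumes "u \<in> carrier_vec n" "v \<in> carrier_vec n" "p \<in> carrier_vec n" "q \<in> carrier_vec n"
  shows "outer n u v * outer n p q = (v \<bullet> p) \<cdot>\<^sub>m outer n u q"
proof -
  have "outer n u v * outer n p q = outer n (outer n u v *\<^sub>v p) q"
    by (rule mult_outer, insert assms, auto)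
  also have "\<dots> = (v \<bullet> p) \<cdot>\<^sub>m outer n u q"
    using assms by (subst outer_mult_vec, auto intro!: eq_matI simp: ac_simps)
  finally show ?thesis .
qed

lemma outer_sandwich: assumes M: "M \<in> carrier_mat n n" and x: "x \<in> carrier_vec n" and y: "y \<in> carrier_vec n"
  shows "\<exists>c. outer n x y * M * outer n x y = c \<cdot>\<^sub>m outer n x y"
proof -
  have "outer n x y * M * outer n x y = outer n x (transpose_mat M *\<^sub>v y) * outer n x y"
    using outer_mult[OF M y] by simp
  also have "\<dots> = ((transpose_mat M *\<^sub>v y) \<bullet> x) \<cdot>\<^sub>m outer n x y"
    by (rule outer_outer, insert M x y, auto)
  finally show ?thesis by blast
qed

lemma ut_eig: assumes "B \<in> carrier_mat n n" "upper_triangular B"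
  shows "eigenvalues_in_field B"
  using char_poly_upper_triangular[OF assms] unfolding eigenvalues_in_field_def by blast

lemma sim_eig: assumes "similar_mat A B" "eigenvalues_in_field B"
  shows "eigenvalues_in_field A"
  using assms char_poly_similar unfolding eigenvalues_in_field_def by metis

lemma eig_outer: fixes u v :: "'a::field vec"
  assumes n: "n > 0" and u: "u \<in> carrier_vec n" and v: "v \<in> carrier_vec n"
  shows "eigenvalues_in_field (outer n u v)"
proof (cases "u = 0\<^sub>v n")
  case True
  show ?thesis by (rule ut_eig[of _ n], auto simp: upper_triangular_def True)
next
  case False
  then obtain j where j: "j < n" and uj: "u $ j \<noteq> 0" using u by (metis eq_vecI carrier_vecD index_zero_vec)
  let ?e = "unit_vec n 0 :: 'a vec"
  have e: "?e \<in> carrier_vec n" by simp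
  have "\<exists>b. b \<in> carrier_vec n \<and> b $ 0 \<noteq> 0 \<and> b \<bullet> u \<noteq> 0"
  proof (cases "u $ 0 = 0")
    case False
    then show ?thesis using n u by (intro exI[of _ ?e], auto)
  next
    case True
    have j0: "j \<noteq> 0"
    proof
      assume "j = 0" then show False using True uj by simp
    qed
    have "(?e + unit_vec n j) \<bullet> u = u $ 0 + u $ j"
      using u n j by (simp add: add_scalar_prod_distrib[of _ n])
    then show ?thesis using True uj j0 n j by (intro exI[of _ "?e + unit_vec n j"], auto)
  qed
  then obtain b where b: "b \<in> carrier_vec n" and b0: "b $ 0 \<noteq> 0" and s0: "b \<bullet> u \<noteq> 0" by blast
  define s where "s = b \<bullet> u"
  define a where "a = (1 / s) \<cdot>\<^sub>v (?e - u)"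
  have a: "a \<in> carrier_vec n" using u by (simp add: a_def)
  define Om where "Om = outer n a b"
  have Om: "Om \<in> carrier_mat n n" by (simp add: Om_def)
  have ba: "b \<bullet> a = (b $ 0 - s) / s"
  proof -
    have "b \<bullet> a = (1/s) * (b \<bullet> (?e - u))" using a b u by (simp add: a_def)
    also have "b \<bullet> (?e - u) = b \<bullet> ?e - b \<bullet> u" using b u by (simp add: scalar_prod_minus_distrib[of _ n])
    also have "b \<bullet> ?e = b $ 0" using b n by (simp add: comm_scalar_prod[of b n])
    finally show ?thesis by (simp add: s_def)
  qed
  have e1: "b \<bullet> a * s = b $ 0 - s" using ba s0 unfolding s_def by simp
  have e2: "(1 + b \<bullet> a) * s = b $ 0" using e1 by (simp add: distrib_right)
  have nz: "1 + b \<bullet> a \<noteq> 0" using e2 b0 by auto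
  define t where "t = 1 / (1 + b \<bullet> a)"
  define P where "P = 1\<^sub>m n + Om"
  define Q where "Q = 1\<^sub>m n + (-t) \<cdot>\<^sub>m Om"
  have P: "P \<in> carrier_mat n n" and Q: "Q \<in> carrier_mat n n" using Om by (auto simp: P_def Q_def)
  have OO: "Om * Om = (b \<bullet> a) \<cdot>\<^sub>m Om" unfolding Om_def by (rule outer_outer, insert a b, auto)
  have "P * Q = Q + Om * Q" unfolding P_def using Om Q by (simp add: add_mult_distrib_mat[of _ n n])
  also have "Om * Q = Om + (-t) \<cdot>\<^sub>m (Om * Om)" unfolding Q_def using Om
    by (subst mult_add_distrib_mat[OF Om one_carrier_mat smult_carrier_mat[OF Om]]) (simp add: mult_smult_distrib[OF Om Om])
  also have "Q + (Om + (-t) \<cdot>\<^sub>m (Om * Om)) = 1\<^sub>m n"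
  proof (rule eq_matI)
    fix i k assume "i < dim_row (1\<^sub>m n :: 'a mat)" "k < dim_col (1\<^sub>m n :: 'a mat)"
    then have i: "i < n" and k: "k < n" by auto
    have "t * (1 + b \<bullet> a) = 1" using nz by (simp add: t_def)
    then have "1 - t - t * (b \<bullet> a) = 0" by (simp add: algebra_simps)
    then have "Om $$ (i,k) * (1 - t - t * (b \<bullet> a)) = 0" by simp
    then show "(Q + (Om + (-t) \<cdot>\<^sub>m (Om * Om))) $$ (i,k) = 1\<^sub>m n $$ (i,k)"
      using i k Om unfolding OO Q_def by (simp add: algebra_simps)
  qed (insert Om Q, auto simp: Q_def)
  finally have PQ: "P * Q = 1\<^sub>m n" .
  have QP: "Q * P = 1\<^sub>m n" by (rule mat_mult_left_right_inverse[OF P Q PQ])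
  have Pu: "P *\<^sub>v u = ?e"
  proof -
    have "P *\<^sub>v u = u + Om *\<^sub>v u" unfolding P_def using Om u by (simp add: add_mult_distrib_mat_vec[of _ n n])
    also have "Om *\<^sub>v u = s \<cdot>\<^sub>v a" unfolding Om_def s_def by (rule outer_mult_vec, insert a b u, auto)
    also have "u + s \<cdot>\<^sub>v a = ?e"
      by (rule eq_vecI, insert u s0, auto simp: a_def s_def)
    finally show ?thesis .
  qed
  define A where "A = outer n u v"
  have A: "A \<in> carrier_mat n n" by (simp add: A_def)
  define B where "B = P * A * Q"
  have B: "B \<in> carrier_mat n n" using P A Q by (simp add: B_def)
  have "B = outer n ?e v * Q" unfolding B_def A_def mult_outer[OF P u] Pu by (rule refl)
  also have "\<dots> = outer n ?e (transpose_mat Q *\<^sub>v v)" by (rule outer_mult[OF Q v])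
  finally have Bo: "B = outer n ?e (transpose_mat Q *\<^sub>v v)" .
  have "upper_triangular B" unfolding Bo upper_triangular_def by auto
  then have eB: "eigenvalues_in_field B" using ut_eig[OF B] by simp
  have "Q * B * P = A"
  proof -
    have PA: "P * A \<in> carrier_mat n n" using P A by (rule mult_carrier_mat)
    have AQ: "A * Q \<in> carrier_mat n n" using A Q by (rule mult_carrier_mat)
    have "Q * (P * A) = (Q * P) * A" by (rule assoc_mult_mat[OF Q P A, symmetric])
    also have "\<dots> = A" unfolding QP using A by (rule left_mult_one_mat)
    finally have QPA: "Q * (P * A) = A" .
    have "Q * B = (Q * (P * A)) * Q" unfolding B_def by (rule assoc_mult_mat[OF Q PA Q, symmetric])
    then have "Q * B = A * Q" unfolding QPA .
    then have "Q * B * P = A * Q * P" by (rule arg_cong[where f="\<lambda>X. X * P"])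
    also have "\<dots> = A * (Q * P)" by (rule assoc_mult_mat[OF A Q P])
    also have "\<dots> = A" unfolding QP using A by (rule right_mult_one_mat)
    finally show ?thesis .
  qed
  then have "similar_mat A B" by (intro similar_matI[of A B Q P n], insert A B P Q PQ QP, auto)
  then show ?thesis using sim_eig eB unfolding A_def by blast
qed

lemma smult_smult_m: "a \<cdot>\<^sub>m (b \<cdot>\<^sub>m (A :: 'a::field mat)) = (a * b) \<cdot>\<^sub>m A"
  by (rule eq_matI, auto simp: mult.assoc)

lemma one_smult_m: "1 \<cdot>\<^sub>m (A :: 'a::field mat) = A"
  by (rule eq_matI, auto)

lemma zero_smult_m: "A \<in> carrier_mat n n \<Longrightarrow> 0 \<cdot>\<^sub>m (A :: 'a::field mat) = 0\<^sub>m n n"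
  by (rule eq_matI, auto)

lemma smult_cancel_m: assumes E: "E \<in> carrier_mat n n" and nz: "E \<noteq> 0\<^sub>m n n"
  and eq: "a \<cdot>\<^sub>m E = b \<cdot>\<^sub>m (E :: 'a::field mat)" shows "a = b"
proof -
  obtain i j where ij: "i < n" "j < n" "E $$ (i,j) \<noteq> 0"
  proof (rule ccontr)
    assume "\<not> thesis"
    with that have "\<forall>i<n. \<forall>j<n. E $$ (i,j) = 0" by blast
    then have "E = 0\<^sub>m n n" using E by (intro eq_matI, auto)
    with nz show False by simp
  qed
  have "(a \<cdot>\<^sub>m E) $$ (i,j) = (b \<cdot>\<^sub>m E) $$ (i,j)" using eq by simp
  then have "a * E $$ (i,j) = b * E $$ (i,j)" using ij E by simp
  then show ?thesis using ij by simp
qed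

lemma main_thm:
  fixes S :: "'a::field mat set" and n :: nat
  assumes npos: "n > 0"
    and cl: "clifford_mat_semigroup n S"
    and rk: "\<forall>A\<in>S. vec_space.rank n A = 1"
    and dec: "\<forall>A\<in>S. \<exists>u v. u \<in> carrier_vec n \<and> v \<in> carrier_vec n \<and> A = outer n u v"
  shows "mat_group S \<and> (\<forall>A\<in>S. \<forall>B\<in>S. A * B = B * A) \<and> (\<forall>A\<in>S. eigenvalues_in_field A)"
proof -
  have ne: "S \<noteq> {}" and SC: "\<And>A. A \<in> S \<Longrightarrow> A \<in> carrier_mat n n"
    and mul: "\<And>A B. A \<in> S \<Longrightarrow> B \<in> S \<Longrightarrow> A * B \<in> S"
    and reg: "\<And>A. A \<in> S \<Longrightarrow> \<exists>X\<in>S. A * X * A = A"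
    and cen: "\<And>E A. E \<in> S \<Longrightarrow> E * E = E \<Longrightarrow> A \<in> S \<Longrightarrow> E * A = A * E"
    using cl unfolding clifford_mat_semigroup_def mat_semigroup_def by auto
  have as: "X * Y * Z = X * (Y * Z)" if "X \<in> S" "Y \<in> S" "Z \<in> S" for X Y Z
    by (rule assoc_mult_mat[OF SC[OF that(1)] SC[OF that(2)] SC[OF that(3)]])
  have nz: "\<And>A. A \<in> S \<Longrightarrow> A \<noteq> 0\<^sub>m n n"
  proof
    fix A assume "A \<in> S" "A = 0\<^sub>m n n"
    then have "vec_space.rank n (0\<^sub>m n n :: 'a mat) = 1" using rk by auto
    moreover have "vec_space.rank n (0\<^sub>m n n :: 'a mat) = 0" by (rule vec_space.rank_0I)
    ultimately show False by simp
  qed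
  have sand: "\<And>E (M :: 'a mat). E \<in> S \<Longrightarrow> M \<in> carrier_mat n n \<Longrightarrow> \<exists>c. E * M * E = c \<cdot>\<^sub>m E"
  proof -
    fix E M :: "'a mat" assume E: "E \<in> S" and M: "M \<in> carrier_mat n n"
    then obtain u v where "u \<in> carrier_vec n" "v \<in> carrier_vec n" "E = outer n u v" using dec by blast
    then show "\<exists>c. E * M * E = c \<cdot>\<^sub>m E" using outer_sandwich[OF M] by blast
  qed
  have uniq: "E = F" if E: "E \<in> S" and F: "F \<in> S" and EE: "E * E = E" and FF: "F * F = F" for E F
  proof -
    have EC: "E \<in> carrier_mat n n" and FC: "F \<in> carrier_mat n n" using E F SC by auto
    have com: "E * F = F * E" using cen[OF E EE F] .
    obtain c where c: "E * F * E = c \<cdot>\<^sub>m E" using sand[OF E FC] by blast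
    have "E * F * E = E * (E * F)" using as[OF E F E] com by simp
    also have "\<dots> = E * F" using as[OF E E F] EE by simp
    finally have EFc: "E * F = c \<cdot>\<^sub>m E" using c by simp
    obtain d where d: "F * E * F = d \<cdot>\<^sub>m F" using sand[OF F EC] by blast
    have "F * E * F = F * (F * E)" using as[OF F E F] com by simp
    also have "\<dots> = F * E" using as[OF F F E] FF by simp
    finally have EFd: "E * F = d \<cdot>\<^sub>m F" using d com by simp
    have c0: "c \<noteq> 0"
    proof
      assume "c = 0"
      then have "E * F = 0\<^sub>m n n" using EFc zero_smult_m[OF EC] by simp
      then show False using nz[OF mul[OF E F]] by simp
    qed
    have "E * (E * F) = E * F" using as[OF E E F] EE by simp
    moreover have "E * (E * F) = (d * c) \<cdot>\<^sub>m E"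
    proof -
      have "E * (E * F) = E * (d \<cdot>\<^sub>m F)" unfolding EFd ..
      also have "\<dots> = d \<cdot>\<^sub>m (E * F)" by (rule mult_smult_distrib[OF EC FC])
      also have "\<dots> = d \<cdot>\<^sub>m (c \<cdot>\<^sub>m E)" unfolding EFc ..
      also have "\<dots> = (d * c) \<cdot>\<^sub>m E" by (rule smult_smult_m)
      finally show ?thesis .
    qed
    ultimately have "c \<cdot>\<^sub>m E = (d * c) \<cdot>\<^sub>m E" using EFc by simp
    then have "c = d * c" by (rule smult_cancel_m[OF EC nz[OF E]])
    then have d1: "d = 1" using c0 by simp
    have "F = 1 \<cdot>\<^sub>m F" by (simp add: one_smult_m)
    also have "\<dots> = c \<cdot>\<^sub>m E" using EFc EFd d1 by simp
    finally have Fc: "F = c \<cdot>\<^sub>m E" .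
    have mm: "(x \<cdot>\<^sub>m E) * (y \<cdot>\<^sub>m E) = (x * y) \<cdot>\<^sub>m E" for x y
    proof -
      have "(x \<cdot>\<^sub>m E) * (y \<cdot>\<^sub>m E) = x \<cdot>\<^sub>m (E * (y \<cdot>\<^sub>m E))" by (rule mult_smult_assoc_mat[OF EC smult_carrier_mat[OF EC]])
      also have "E * (y \<cdot>\<^sub>m E) = y \<cdot>\<^sub>m (E * E)" by (rule mult_smult_distrib[OF EC EC])
      also have "x \<cdot>\<^sub>m (y \<cdot>\<^sub>m (E * E)) = (x * y) \<cdot>\<^sub>m E" unfolding EE by (rule smult_smult_m)
      finally show ?thesis .
    qed
    have "F * F = (c * c) \<cdot>\<^sub>m E" unfolding Fc by (rule mm)
    then have "c \<cdot>\<^sub>m E = (c * c) \<cdot>\<^sub>m E" using FF Fc by simp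
    then have "c = c * c" by (rule smult_cancel_m[OF EC nz[OF E]])
    then have "c = 1" using c0 by (metis mult_cancel_left1)
    then show ?thesis using Fc by (simp add: one_smult_m)
  qed
  obtain A0 where A0: "A0 \<in> S" using ne by blast
  obtain X0 where X0: "X0 \<in> S" "A0 * X0 * A0 = A0" using reg[OF A0] by blast
  define E where "E = A0 * X0"
  have E: "E \<in> S" using mul[OF A0 X0(1)] by (simp add: E_def)
  have EE: "E * E = E" unfolding E_def using as[OF mul[OF A0 X0(1)] A0 X0(1)] X0(2) by simp
  have props: "E * A = A \<and> A * E = A \<and> (\<exists>B\<in>S. A * B = E \<and> B * A = E)" if A: "A \<in> S" for A
  proof -
    obtain X where X: "X \<in> S" "A * X * A = A" using reg[OF A] by blast
    have AX: "A * X = E"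
      by (rule uniq[OF mul[OF A X(1)] E _ EE], insert as[OF mul[OF A X(1)] A X(1)] X(2), simp)
    have XA: "X * A = E"
      by (rule uniq[OF mul[OF X(1) A] E _ EE], insert as[OF X(1) A mul[OF X(1) A]] as[OF X(1) A X(1)] as[OF A X(1) A] X(2), simp)
    have 1: "E * A = A" using X(2) AX by simp
    have 2: "A * E = A" using X(2) XA as[OF A X(1) A] by simp
    define B where "B = X * A * X"
    have B: "B \<in> S" unfolding B_def using mul[OF mul[OF X(1) A] X(1)] .
    have "A * B = A * X * A * X" unfolding B_def using as[OF A mul[OF X(1) A] X(1)] as[OF A X(1) A] by simp
    then have 3: "A * B = E" using X(2) AX by simp
    have "B * A = X * (A * X * A)" unfolding B_def
      using as[OF mul[OF X(1) A] X(1) A] as[OF X(1) A mul[OF X(1) A]] as[OF X(1) A X(1)] as[OF A X(1) A] by simp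
    then have 4: "B * A = E" using X(2) XA by simp
    show ?thesis using 1 2 3 4 B by blast
  qed
  have c1: "\<forall>A\<in>S. \<forall>B\<in>S. A * B \<in> S" using mul by blast
  have c2: "(\<forall>A\<in>S. E * A = A \<and> A * E = A) \<and> (\<forall>A\<in>S. \<exists>B\<in>S. A * B = E \<and> B * A = E)"
    using props by blast
  have grp: "mat_group S" unfolding mat_group_def using c1 c2 E by blast
  have scal: "\<exists>c. A = c \<cdot>\<^sub>m E" if A: "A \<in> S" for A
  proof -
    obtain c where c: "E * A * E = c \<cdot>\<^sub>m E" using sand[OF E SC[OF A]] by blast
    have "E * A * E = A" using props[OF A] by simp
    with c show ?thesis by auto
  qed
  have comm: "A * B = B * A" if A: "A \<in> S" and B: "B \<in> S" for A B
  proof -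
    obtain c d where c: "A = c \<cdot>\<^sub>m E" and d: "B = d \<cdot>\<^sub>m E" using scal A B by blast
    have EC: "E \<in> carrier_mat n n" using SC E by simp
    have m: "(x \<cdot>\<^sub>m E) * (y \<cdot>\<^sub>m E) = (x * y) \<cdot>\<^sub>m E" for x y
    proof -
      have "(x \<cdot>\<^sub>m E) * (y \<cdot>\<^sub>m E) = x \<cdot>\<^sub>m (E * (y \<cdot>\<^sub>m E))" by (rule mult_smult_assoc_mat[OF EC smult_carrier_mat[OF EC]])
      also have "E * (y \<cdot>\<^sub>m E) = y \<cdot>\<^sub>m (E * E)" by (rule mult_smult_distrib[OF EC EC])
      also have "x \<cdot>\<^sub>m (y \<cdot>\<^sub>m (E * E)) = (x * y) \<cdot>\<^sub>m E" unfolding EE by (rule smult_smult_m)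
      finally show ?thesis .
    qed
    show ?thesis unfolding c d m by (simp add: mult.commute)
  qed
  have eig: "eigenvalues_in_field A" if A: "A \<in> S" for A
  proof -
    obtain u v where "u \<in> carrier_vec n" "v \<in> carrier_vec n" "A = outer n u v" using dec A by blast
    then show ?thesis using eig_outer[OF npos] by simp
  qed
  show ?thesis using grp comm eig by simp
qed


theorem corollary2p4:
  fixes S :: "'a::field mat set" and n :: nat
  assumes "n > 0"
    and "clifford_mat_semigroup n S"
    and "\<forall>A\<in>S. vec_space.rank n A = 1"
  shows "mat_group S \<and> (\<forall>A\<in>S. \<forall>B\<in>S. A * B = B * A) \<and> (\<forall>A\<in>S. eigenvalues_in_field A)"
proof -
  have SC: "\<And>A. A \<in> S \<Longrightarrow> A \<in> carrier_mat n n"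
    using assms(2) unfolding clifford_mat_semigroup_def mat_semigroup_def by auto
  have dec: "\<forall>A\<in>S. \<exists>u v. u \<in> carrier_vec n \<and> v \<in> carrier_vec n \<and> A = outer n u v"
  proof
    fix A assume A: "A \<in> S"
    obtain u w where u: "u \<in> carrier_vec n" and w: "\<forall>i<n. \<forall>j<n. A $$ (i,j) = u$i * w j"
      using rank1_outer[OF SC[OF A]] assms(3) A by blast
    have "A = outer n u (vec n w)" using SC[OF A] w by (intro eq_matI, auto)
    then show "\<exists>u v. u \<in> carrier_vec n \<and> v \<in> carrier_vec n \<and> A = outer n u v"
      using u by (intro exI[of _ u] exI[of _ "vec n w"], simp)
  qed
  show ?thesis by (rule main_thm[OF assms dec])
qed

end
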